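(* Let $\mathcal{H}$ be a Hilbert space, $\mathcal{H}_1$ a closed subspace with $\{0\}\ne\mathcal{H}_1\ne\mathcal{H}$, $P:\mathcal{H}\to\mathcal{H}_1$ the orthogonal projection onto $\mathcal{H}_1$ (so $P^*:\mathcal{H}_1\to\mathcal{H}$ is the inclusion), $Q:\mathcal{H}\to\mathcal{H}_1^\perp$ the orthogonal projection onto $\mathcal{H}_1^\perp$, $H\ge 0$ a bounded selfadjoint operator on $\mathcal{H}$, and $H_t:=H+tQ^*Q$ for $t\ge0$. Then for $t\ge 2\|H+1\|^2$, $$\left\|(H_t+1)^{-1}-P^*(PHP^*+1)^{-1}P\right\|\le \frac{4\|H+1\|^2}{1+t}.$$ *)

theory Defs
  imports "HOL-Analysis.Analysis"
begin

text \<open>Orthogonal projection onto a (closed) subspace S of a real Hilbert space,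
  viewed as an operator on the whole space (i.e. P^* P where P maps onto S).\<close>
definition orth_proj :: "'a::real_inner set \<Rightarrow> 'a \<Rightarrow> 'a" where
  "orth_proj S x = (THE y. y \<in> S \<and> x - y \<in> orthogonal_comp S)"

text \<open>The operator P^* (P H P^* + 1)^{-1} P on the whole space: P x is mapped
  to the inverse image under the operator y |-> P (H y) + y acting on S,
  and P^* is the inclusion of S.\<close>
definition compressed_resolvent :: "'a::real_inner set \<Rightarrow> ('a \<Rightarrow> 'a) \<Rightarrow> 'a \<Rightarrow> 'a" where
  "compressed_resolvent S H x = inv_into S (\<lambda>y. orth_proj S (H y) + y) (orth_proj S x)"

end

theory Submission
  imports Defs
begin

lemma minimizer_orth:
  fixes S :: "'a::real_inner set"
  assumes "subspace S" "y \<in> S" "\<And>z. z \<in> S \<Longrightarrow> norm (x - y)^2 \<le> norm (x - z)^2"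
    and "z \<in> S"
  shows "inner (x - y) z = 0"
proof -
  define a where "a = inner (x - y) z"
  define c where "c = inner z z"
  have c0: "c \<ge> 0" unfolding c_def by simp
  define s where "s = a / (c + 1)"
  have "y + s *\<^sub>R z \<in> S" using assms by (simp add: subspace_add subspace_scale)
  hence "norm (x - y)^2 \<le> norm ((x - y) - s *\<^sub>R z)^2" using assms(3)[of "y + s *\<^sub>R z"]
    by (simp add: algebra_simps)
  also have "\<dots> = norm (x - y)^2 - 2 * s * a + s^2 * c"
    unfolding power2_norm_eq_inner a_def c_def
    by (simp add: inner_diff_left inner_diff_right inner_commute power2_eq_square algebra_simps)
  finally have "0 \<le> - 2 * s * a + s^2 * c" by simp
  moreover have "a = s * (c + 1)" unfolding s_def using c0 by simp
  ultimately have "0 \<le> - (s * s * (c + 2))" by (simp add: power2_eq_square algebra_simps)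
  moreover have "c + 2 > 0" using c0 by simp
  ultimately have "s * s \<le> 0" by (simp add: mult_le_0_iff)
  hence "s = 0" by (metis mult_eq_0_iff not_square_less_zero order_le_less)
  hence "a = 0" using \<open>a = s * (c + 1)\<close> by simp
  thus ?thesis unfolding a_def by simp
qed

lemma proj_exists:
  fixes S :: "'a::{real_inner,complete_space} set"
  assumes "subspace S" "closed S"
  shows "\<exists>y\<in>S. \<forall>z\<in>S. inner (x - y) z = 0"
proof -
  define D where "D = (\<lambda>y. norm (x - y)^2) ` S"
  define d where "d = Inf D"
  have S0: "0 \<in> S" using assms subspace_0 by blast
  have bdd: "bdd_below D" unfolding D_def by (auto intro: bdd_belowI[of _ 0])
  have ne: "D \<noteq> {}" using S0 unfolding D_def by auto
  have low: "d \<le> norm (x - z)^2" if "z \<in> S" for z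
    unfolding d_def D_def using bdd that by (auto intro: cInf_lower simp: D_def)
  have "\<forall>n. \<exists>y\<in>S. norm (x - y)^2 < d + 1 / real (Suc n)"
  proof
    fix n
    have "Inf D < d + 1 / real (Suc n)" unfolding d_def by simp
    then obtain e where "e \<in> D" "e < d + 1 / real (Suc n)" using cInf_lessD[OF ne] by blast
    thus "\<exists>y\<in>S. norm (x - y)^2 < d + 1 / real (Suc n)" unfolding D_def by auto
  qed
  then obtain Y where Y: "\<And>n. Y n \<in> S" "\<And>n. norm (x - Y n)^2 < d + 1 / real (Suc n)"
    by metis
  have par: "norm (Y n - Y m)^2 < 2 / real (Suc n) + 2 / real (Suc m)" for n m
  proof -
    have mid: "(1/2) *\<^sub>R (Y n + Y m) \<in> S" using Y assms by (simp add: subspace_add subspace_scale)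
    have "norm (Y n - Y m)^2 = 2 * norm (x - Y n)^2 + 2 * norm (x - Y m)^2 - 4 * norm (x - (1/2) *\<^sub>R (Y n + Y m))^2"
      unfolding power2_norm_eq_inner
      by (simp add: inner_diff_left inner_diff_right inner_add_left inner_add_right inner_commute algebra_simps)
    also have "\<dots> < 2 * (d + 1 / real (Suc n)) + 2 * (d + 1 / real (Suc m)) - 4 * d"
      using Y(2)[of n] Y(2)[of m] low[OF mid] by (smt (verit))
    finally show ?thesis by simp
  qed
  have "Cauchy Y"
    unfolding Cauchy_def
  proof (intro allI impI)
    fix e :: real assume e: "e > 0"
    obtain M :: nat where M: "4 / e^2 < real M" using reals_Archimedean2 by blast
    have "\<forall>m\<ge>M. \<forall>n\<ge>M. dist (Y m) (Y n) < e"
    proof (intro allI impI)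
      fix m n assume mn: "m \<ge> M" "n \<ge> M"
      have e2: "e^2 > 0" using e by simp
      have "2 / real (Suc m) \<le> 2 / real (Suc M)" using mn by (simp add: frac_le)
      moreover have "2 / real (Suc n) \<le> 2 / real (Suc M)" using mn by (simp add: frac_le)
      moreover have "4 / real (Suc M) < e^2"
      proof -
        have "4 < e^2 * real M" using M e2 by (simp add: divide_less_eq mult.commute)
        hence "4 < e^2 * real (Suc M)" using e2 by (smt (verit) mult_left_mono of_nat_Suc)
        thus ?thesis by (simp add: divide_less_eq mult.commute)
      qed
      ultimately have "norm (Y m - Y n)^2 < e^2" using par[of m n] by linarith
      hence "norm (Y m - Y n) < e" using e by (simp add: power_less_imp_less_base)
      thus "dist (Y m) (Y n) < e" by (simp add: dist_norm)
    qed
    thus "\<exists>M. \<forall>m\<ge>M. \<forall>n\<ge>M. dist (Y m) (Y n) < e" by blast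
  qed
  then obtain y where y: "Y \<longlonglongrightarrow> y" using Cauchy_convergent_iff convergent_def by blast
  have yS: "y \<in> S" using closed_sequentially[OF assms(2) Y(1) y] .
  have t1: "(\<lambda>n. norm (x - Y n)^2) \<longlonglongrightarrow> norm (x - y)^2"
    by (intro tendsto_intros y)
  have t2: "(\<lambda>n. d + 1 / real (Suc n)) \<longlonglongrightarrow> d + 0"
    by (intro tendsto_intros LIMSEQ_inverse_real_of_nat[unfolded inverse_eq_divide])
  have "norm (x - y)^2 \<le> d" using LIMSEQ_le[OF t1 t2] Y(2) less_imp_le by auto
  hence "\<And>z. z \<in> S \<Longrightarrow> norm (x - y)^2 \<le> norm (x - z)^2" using low order_trans by blast
  thus ?thesis using minimizer_orth[OF assms(1) yS] yS by blast
qed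


lemma orth_proj_eqI:
  fixes T :: "'a::real_inner set"
  assumes "subspace T" "y \<in> T" "\<And>z. z \<in> T \<Longrightarrow> inner (x - y) z = 0"
  shows "orth_proj T x = y"
  unfolding orth_proj_def
proof (rule the_equality)
  show "y \<in> T \<and> x - y \<in> orthogonal_comp T"
    using assms by (auto simp: orthogonal_comp_def orthogonal_def inner_commute)
next
  fix y' assume h: "y' \<in> T \<and> x - y' \<in> orthogonal_comp T"
  have d: "y' - y \<in> T" using h assms by (simp add: subspace_diff)
  have "inner (x - y') (y' - y) = 0" using h d by (auto simp: orthogonal_comp_def orthogonal_def inner_commute)
  moreover have "inner (x - y) (y' - y) = 0" using assms(3) d by simp
  ultimately have "inner (y' - y) (y' - y) = 0"
    by (simp add: inner_diff_left inner_diff_right algebra_simps)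
  thus "y' = y" by simp
qed

locale cproj =
  fixes S :: "'a::{real_inner,complete_space} set"
  assumes sub: "subspace S" and cl: "closed S"
begin

definition "P = orth_proj S"

lemma P_prop: "P x \<in> S" "\<And>z. z \<in> S \<Longrightarrow> inner (x - P x) z = 0"
proof -
  obtain y where y: "y \<in> S" "\<forall>z\<in>S. inner (x - y) z = 0" using proj_exists[OF sub cl] by blast
  have "P x = y" unfolding P_def by (rule orth_proj_eqI[OF sub]) (use y in auto)
  thus "P x \<in> S" "\<And>z. z \<in> S \<Longrightarrow> inner (x - P x) z = 0" using y by auto
qed

lemma P_inner: "z \<in> S \<Longrightarrow> inner (P x) z = inner x z"
  using P_prop(2)[of z x] by (simp add: inner_diff_left)

lemma P_eqI: "y \<in> S \<Longrightarrow> (\<And>z. z \<in> S \<Longrightarrow> inner (x - y) z = 0) \<Longrightarrow> P x = y"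
  unfolding P_def by (rule orth_proj_eqI[OF sub])

lemma P_lin: "linear P"
proof
  fix x y show "P (x + y) = P x + P y"
  proof (rule P_eqI)
    show "P x + P y \<in> S" using P_prop(1) sub by (simp add: subspace_add)
    fix z assume "z \<in> S"
    thus "inner (x + y - (P x + P y)) z = 0" using P_inner[of z x] P_inner[of z y]
      by (simp add: inner_diff_left inner_add_left)
  qed
next
  fix r x show "P (r *\<^sub>R x) = r *\<^sub>R P x"
  proof (rule P_eqI)
    show "r *\<^sub>R P x \<in> S" using P_prop(1) sub by (simp add: subspace_scale)
    fix z assume "z \<in> S"
    thus "inner (r *\<^sub>R x - r *\<^sub>R P x) z = 0" using P_inner[of z x]
      by (simp add: inner_diff_left)
  qed
qed

lemma P_norm: "norm (P x) \<le> norm x"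
proof -
  define q where "q = x - P x"
  have o: "inner q (P x) = 0" unfolding q_def using P_prop(2)[OF P_prop(1)] .
  have o': "inner (P x) q = 0" using o by (simp add: inner_commute)
  have x: "P x + q = x" unfolding q_def by simp
  have "inner (P x + q) (P x + q) = inner (P x) (P x) + inner q q"
    by (simp only: inner_add_left inner_add_right o o' add_0_left add_0_right)
  hence "inner x x = inner (P x) (P x) + inner q q" unfolding x .
  hence "norm x ^ 2 = norm (P x)^2 + norm q ^ 2" by (simp only: power2_norm_eq_inner)
  hence "norm (P x)^2 \<le> norm x^2" using zero_le_power2[of "norm q"] by linarith
  thus ?thesis using norm_ge_zero power2_le_imp_le by blast
qed

lemma P_bl: "bounded_linear P"
  using P_lin P_norm by (auto intro!: bounded_linear_intro[of _ 1] simp: linear_add linear_scale)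

lemma Q_eq: "orth_proj (orthogonal_comp S) x = x - P x"
proof (rule orth_proj_eqI[OF subspace_orthogonal_comp])
  show "x - P x \<in> orthogonal_comp S"
    using P_prop by (auto simp: orthogonal_comp_def orthogonal_def inner_commute)
  fix z assume "z \<in> orthogonal_comp S"
  thus "inner (x - (x - P x)) z = 0" using P_prop(1)[of x]
    by (auto simp: orthogonal_comp_def orthogonal_def)
qed

end

lemma coercive_surj:
  fixes T :: "'a::{real_inner,complete_space} set"
  assumes sub: "subspace T" and cl: "closed T" and bl: "bounded_linear g"
    and into: "\<And>y. y \<in> T \<Longrightarrow> g y \<in> T"
    and co: "\<And>y. y \<in> T \<Longrightarrow> norm y ^ 2 \<le> inner (g y) y"
    and w: "w \<in> T"
  shows "w \<in> g ` T"
proof -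
  interpret g: bounded_linear g by fact
  have lin: "linear g" by (simp add: bl bounded_linear.linear)
  have dist_le: "norm (a - b) \<le> norm (g a - g b)" if "a \<in> T" "b \<in> T" for a b
  proof -
    have ab: "a - b \<in> T" using that sub by (simp add: subspace_diff)
    have "norm (a - b)^2 \<le> inner (g (a - b)) (a - b)" using co[OF ab] .
    also have "\<dots> \<le> norm (g a - g b) * norm (a - b)" using Cauchy_Schwarz_ineq2[of "g a - g b" "a - b"] g.diff[of a b] by simp
    finally have "norm (a - b) * norm (a - b) \<le> norm (g a - g b) * norm (a - b)"
      by (simp add: power2_eq_square)
    thus ?thesis
      by (cases "norm (a - b) = 0") (auto simp: mult_le_cancel_right)
  qed
  define R where "R = g ` T"
  have subR: "subspace R" unfolding R_def using lin sub by (rule linear_subspace_image)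
  have clR: "closed R"
    unfolding closed_sequential_limits
  proof (intro allI impI)
    fix X l assume h: "(\<forall>n. X n \<in> R) \<and> X \<longlonglongrightarrow> l"
    hence "\<forall>n. \<exists>y. y \<in> T \<and> X n = g y" unfolding R_def by blast
    then obtain u where u0: "\<forall>n. u n \<in> T \<and> X n = g (u n)" by (rule choice[THEN exE]) blast
    hence u: "\<And>n. u n \<in> T" "\<And>n. X n = g (u n)" by auto
    have "Cauchy X" using h LIMSEQ_imp_Cauchy by blast
    have "Cauchy u"
      unfolding Cauchy_def
    proof (intro allI impI)
      fix e :: real assume "e > 0"
      then obtain M where M: "\<forall>m\<ge>M. \<forall>n\<ge>M. dist (X m) (X n) < e" using \<open>Cauchy X\<close> unfolding Cauchy_def by blast
      show "\<exists>M. \<forall>m\<ge>M. \<forall>n\<ge>M. dist (u m) (u n) < e"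
      proof (intro exI allI impI)
        fix m n assume "m \<ge> M" "n \<ge> M"
        hence "dist (X m) (X n) < e" using M by blast
        thus "dist (u m) (u n) < e" using dist_le[OF u(1) u(1), of m n] u(2) by (simp add: dist_norm)
      qed
    qed
    then obtain v where v: "u \<longlonglongrightarrow> v" using Cauchy_convergent_iff convergent_def by blast
    have vT: "v \<in> T" using closed_sequentially[OF cl u(1) v] .
    have "(\<lambda>n. g (u n)) \<longlonglongrightarrow> g v" by (rule g.tendsto[OF v])
    moreover have "X = (\<lambda>n. g (u n))" using u(2) by (simp add: fun_eq_iff)
    ultimately have "X \<longlonglongrightarrow> g v" by simp
    hence "l = g v" using h LIMSEQ_unique by blast
    thus "l \<in> R" unfolding R_def using vT by blast
  qed
  obtain p where p: "p \<in> R" "\<forall>z\<in>R. inner (w - p) z = 0" using proj_exists[OF subR clR] by blast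
  have pT: "p \<in> T" using p into unfolding R_def by auto
  have wp: "w - p \<in> T" using w pT sub by (simp add: subspace_diff)
  have "g (w - p) \<in> R" using wp unfolding R_def by blast
  hence "inner (w - p) (g (w - p)) = 0" using p(2) by blast
  hence "inner (g (w - p)) (w - p) = 0" by (simp add: inner_commute)
  hence "norm (w - p)^2 \<le> 0" using co[OF wp] by simp
  hence "w = p" by simp
  thus ?thesis using p unfolding R_def by simp
qed


lemma div_bound_aux:
  fixes a b :: real
  assumes "a * a \<le> b * a" "0 \<le> a" "0 \<le> b" shows "a \<le> b"
  using assms by (cases "a = 0") (auto simp: mult_le_cancel_right)

theorem proposition4p2:
  fixes S :: "'a::{real_inner, complete_space} set"
    and H :: "'a \<Rightarrow> 'a"
    and t :: real
  assumes "subspace S" and "closed S"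
    and "S \<noteq> {0}" and "S \<noteq> UNIV"
    and "bounded_linear H"
    and "\<And>x y. inner (H x) y = inner x (H y)"
    and "\<And>x. inner (H x) x \<ge> 0"
    and "t \<ge> 2 * (onorm (\<lambda>x. H x + x))\<^sup>2"
  shows "onorm (\<lambda>x. inv (\<lambda>z. H z + t *\<^sub>R orth_proj (orthogonal_comp S) z + z) x
                   - compressed_resolvent S H x)
         \<le> 4 * (onorm (\<lambda>x. H x + x))\<^sup>2 / (1 + t)"
proof -
  interpret cproj S using assms(1,2) by unfold_locales
  interpret H: bounded_linear H by fact
  define N where "N = onorm (\<lambda>x. H x + x)"
  have blH1: "bounded_linear (\<lambda>x. H x + x)"
    by (intro bounded_linear_add assms(5) bounded_linear_ident)
  have N: "norm (H z + z) \<le> N * norm z" for z unfolding N_def by (rule onorm[OF blH1])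
  have Hpos: "0 \<le> inner (H z) z" for z by (rule assms(7))
  have Hb: "norm (H z) \<le> N * norm z" for z
  proof -
    have "norm (H z)^2 \<le> norm (H z + z)^2"
      unfolding power2_norm_eq_inner using Hpos[of z]
      by (simp add: inner_add_left inner_add_right inner_commute[of z "H z"])
    hence "norm (H z) \<le> norm (H z + z)" using norm_ge_zero power2_le_imp_le by blast
    thus ?thesis using N[of z] by linarith
  qed
  have N1: "1 \<le> N"
  proof -
    obtain e where e: "e \<in> S" "e \<noteq> 0" using assms(3) subspace_0[OF assms(1)] by blast
    have "norm e * norm e \<le> inner (H e + e) e" using Hpos[of e]
      by (simp add: inner_add_left power2_norm_eq_inner[symmetric] power2_eq_square)
    also have "\<dots> \<le> norm (H e + e) * norm e" by (rule norm_cauchy_schwarz)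
    also have "\<dots> \<le> N * norm e * norm e" using N[of e] by (simp add: mult_right_mono)
    finally have "norm e * norm e \<le> N * norm e * norm e" .
    hence "1 * (norm e * norm e) \<le> N * (norm e * norm e)" by (simp add: algebra_simps)
    moreover have "norm e * norm e > 0" using e by simp
    ultimately show ?thesis using mult_le_cancel_right_pos[of "norm e * norm e" 1 N] by linarith
  qed
  have t0: "0 \<le> t" using assms(8) by (smt (verit) zero_le_power2)
  define A where "A = (\<lambda>z. H z + t *\<^sub>R orth_proj (orthogonal_comp S) z + z)"
  have Aeq: "A z = H z + t *\<^sub>R (z - P z) + z" for z unfolding A_def Q_eq ..
  have Pq: "inner (P z) (z - P z) = 0" for z using P_prop(2)[OF P_prop(1), of z z] by (simp add: inner_commute)
  have qz: "inner (z - P z) z = inner (z - P z) (z - P z)" for z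
    using Pq[of z] by (simp add: inner_diff_left inner_diff_right inner_commute)
  have Abl: "bounded_linear A"
  proof -
    have "A = (\<lambda>z. H z + t *\<^sub>R (z - P z) + z)" using Aeq by (simp add: fun_eq_iff)
    moreover have "bounded_linear (\<lambda>z. t *\<^sub>R (z - P z))"
      using bounded_linear_compose[OF bounded_linear_scaleR_right[of t] bounded_linear_sub[OF bounded_linear_ident P_bl]]
      by (simp add: o_def)
    moreover have "bounded_linear (\<lambda>z. H z + t *\<^sub>R (z - P z) + z)"
      using calculation(2) by (intro bounded_linear_add bounded_linear_scaleR_right bounded_linear_sub assms(5)
          bounded_linear_ident P_bl)
    ultimately show ?thesis by simp
  qed
  have Aco: "norm z ^ 2 \<le> inner (A z) z" for z
  proof -
    have "inner (A z) z = inner (H z) z + t * inner (z - P z) (z - P z) + inner z z"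
      unfolding Aeq by (simp add: inner_add_left qz)
    moreover have "0 \<le> t * inner (z - P z) (z - P z)" using t0 by simp
    ultimately show ?thesis using Hpos[of z] by (simp add: power2_norm_eq_inner)
  qed
  have surjA: "surj A"
  proof -
    have "w \<in> A ` UNIV" for w
      by (rule coercive_surj[OF subspace_UNIV closed_UNIV Abl]) (use Aco in auto)
    thus ?thesis by blast
  qed
  define g where "g = (\<lambda>y. P (H y) + y)"
  have gbl: "bounded_linear g" unfolding g_def
    by (intro bounded_linear_add bounded_linear_compose[OF P_bl assms(5)] bounded_linear_ident)
  have gin: "y \<in> S \<Longrightarrow> g y \<in> S" for y unfolding g_def
    using P_prop(1) assms(1) by (simp add: subspace_add)
  have gco: "y \<in> S \<Longrightarrow> norm y ^ 2 \<le> inner (g y) y" for y unfolding g_def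
    using Hpos[of y] by (simp add: inner_add_left P_inner power2_norm_eq_inner)
  have surjg: "P x \<in> g ` S" for x
    by (rule coercive_surj[OF assms(1,2) gbl gin gco P_prop(1)])
  have CR: "compressed_resolvent S H x = inv_into S g (P x)" for x
    unfolding compressed_resolvent_def g_def P_def ..
  have main: "norm (inv A x - compressed_resolvent S H x) \<le> (N + 1)^2 / (1 + t) * norm x" for x
  proof -
    define u where "u = inv A x"
    define v where "v = inv_into S g (P x)"
    have Au: "A u = x" unfolding u_def using surjA by (simp add: surj_f_inv_f)
    have vS: "v \<in> S" unfolding v_def using surjg by (rule inv_into_into)
    have gv: "g v = P x" unfolding v_def using surjg by (rule f_inv_into_f)
    define q where "q = u - P u"
    have eq: "H u + t *\<^sub>R q + u = x" using Au unfolding Aeq q_def .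
    have u1: "norm u \<le> norm x"
    proof -
      have "norm u * norm u \<le> inner x u" using Aco[of u] Au by (simp add: power2_eq_square)
      also have "\<dots> \<le> norm x * norm u" by (rule norm_cauchy_schwarz)
      finally show ?thesis by (rule div_bound_aux) (use N1 in simp_all)
    qed
    have uq: "inner u q = inner q q" unfolding q_def using qz[of u] by (simp add: inner_commute)
    have q1: "(1 + t) * norm q \<le> (1 + N) * norm x"
    proof -
      have "inner x q = inner (H u) q + t * inner q q + inner u q"
        unfolding eq[symmetric] by (simp add: inner_add_left)
      hence "(1 + t) * (norm q * norm q) = inner x q - inner (H u) q"
        using uq by (simp add: algebra_simps power2_norm_eq_inner[symmetric] power2_eq_square)
      also have "\<dots> \<le> norm x * norm q + norm (H u) * norm q"
        using Cauchy_Schwarz_ineq2[of x q] Cauchy_Schwarz_ineq2[of "H u" q] Cauchy_Schwarz_ineq2[of "H u" q]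
        by (smt (verit) abs_ge_self abs_minus_cancel inner_minus_left)
      also have "\<dots> \<le> norm x * norm q + N * norm x * norm q"
        using Hb[of u] u1 N1 by (smt (verit) mult_left_mono mult_right_mono norm_ge_zero)
      finally have "((1 + t) * norm q) * norm q \<le> ((1 + N) * norm x) * norm q"
        by (simp add: algebra_simps)
      thus ?thesis using N1 by (cases "norm q = 0") (auto simp: mult_le_cancel_right)
    qed
    define r where "r = P u - v"
    have rS: "r \<in> S" unfolding r_def using P_prop(1) vS assms(1) by (simp add: subspace_diff)
    have qr: "inner q r = 0" unfolding q_def using P_prop(2)[OF rS] .
    have r1: "norm r \<le> N * norm q"
    proof -
      have Pu: "P u = u - q" unfolding q_def by simp
      have i1: "inner (H v + v) r = inner x r"
      proof -
        have "inner (H v + v) r = inner (g v) r" unfolding g_def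
          by (simp add: inner_add_left P_inner[OF rS])
        also have "\<dots> = inner x r" using gv P_inner[OF rS] by simp
        finally show ?thesis .
      qed
      have i2: "inner (H (P u) + P u) r = inner x r - inner (H q) r"
      proof -
        have "H (P u) + P u = (H u + t *\<^sub>R q + u) - t *\<^sub>R q - H q - q" unfolding Pu
          by (simp add: H.diff algebra_simps)
        hence "inner (H (P u) + P u) r = inner x r - t * inner q r - inner (H q) r - inner q r"
          unfolding eq by (simp add: inner_diff_left)
        thus ?thesis using qr by simp
      qed
      have "norm r * norm r \<le> inner (H r + r) r" using Hpos[of r]
        by (simp add: inner_add_left power2_norm_eq_inner[symmetric] power2_eq_square)
      also have "inner (H r + r) r = inner (H (P u) + P u) r - inner (H v + v) r"
        unfolding r_def by (simp add: H.diff inner_diff_left inner_add_left)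
      also have "\<dots> = - inner (H q) r" using i1 i2 by simp
      also have "\<dots> \<le> norm (H q) * norm r"
        using Cauchy_Schwarz_ineq2[of "H q" r] by linarith
      also have "\<dots> \<le> N * norm q * norm r" using Hb[of q] by (simp add: mult_right_mono)
      finally show ?thesis by (rule div_bound_aux) (use N1 in simp_all)
    qed
    have "u - v = r + q" unfolding r_def q_def by simp
    hence "norm (u - v) \<le> norm r + norm q" using norm_triangle_ineq by metis
    also have "\<dots> \<le> (N + 1) * norm q" using r1 by (simp add: algebra_simps)
    also have "\<dots> \<le> (N + 1)^2 / (1 + t) * norm x"
    proof -
      have "norm q \<le> (1 + N) * norm x / (1 + t)" using q1 t0 by (simp add: field_simps)
      hence "(N + 1) * norm q \<le> (N + 1) * ((1 + N) * norm x / (1 + t))" using N1 mult_left_mono[of "norm q" "(1 + N) * norm x / (1 + t)" "N + 1"] by linarith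
      thus ?thesis by (simp add: power2_eq_square algebra_simps)
    qed
    finally show ?thesis unfolding u_def v_def CR by simp
  qed
  have fin: "onorm (\<lambda>x. inv A x - compressed_resolvent S H x) \<le> 4 * N^2 / (1 + t)"
  proof (rule onorm_bound)
    show "0 \<le> 4 * N^2 / (1 + t)" using t0 by simp
    fix x :: 'a
    have "N * 1 \<le> N * N" using N1 by (intro mult_left_mono) auto
    moreover have "(N + 1)^2 = N * N + 2 * N + 1" by (simp add: power2_eq_square algebra_simps)
    moreover have "4 * N^2 = 4 * (N * N)" by (simp add: power2_eq_square)
    ultimately have "(N + 1)^2 \<le> 4 * N^2" using N1 by linarith
    hence "(N + 1)^2 / (1 + t) \<le> 4 * N^2 / (1 + t)" using t0 by (simp add: divide_right_mono)
    hence "(N + 1)^2 / (1 + t) * norm x \<le> 4 * N^2 / (1 + t) * norm x" by (rule mult_right_mono) simp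
    thus "norm (inv A x - compressed_resolvent S H x) \<le> 4 * N^2 / (1 + t) * norm x" using main[of x] by linarith
  qed
  thus ?thesis unfolding A_def N_def .
qed

end
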